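(* Let $m,n$ be nonzero integers with $|m|<|n|$, let $h=\gcd(m,n)$, $p=|m|/h$, $q=|n|/h$. Let $u_1,u_2$ be vertices of type $a$ of $\Lambda_{m,n}$, with corresponding vertices $\bar u_1,\bar u_2$ of $T$ and corresponding $a$-lines $\ell_1,\ell_2$ of $\Upsilon_{m,n}$. Assume that some $t$-line intersects both $\ell_1$ and $\ell_2$, and let $\ell^{12}_2\subseteq\ell_2$ be the set of all points $\ell_2\cap\ell$ where $\ell$ ranges over the $t$-lines intersecting both $\ell_1$ and $\ell_2$. Then $\ell^{12}_2$ is a set of equally spaced vertices of $\ell_2$, with gap (number of $a$-edges along $\ell_2$ between consecutive elements) equal to $hq^{d_T(\bar u_1,\bar u_2)}$ if $u_2<u_1$, and equal to $hp^{d_T(\bar u_1,\bar u_2)}$ if $u_1<u_2$.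
   Context: $\mathrm{BS}(m,n)=\langle a,t\mid ta^mt^{-1}=a^n\rangle$; $\Upsilon_{m,n}$ is its Cayley graph for $\{a,t\}$ (edges $g\to gs$ oriented and labeled by $s$); $a$-lines and $t$-lines are the subgraphs spanned by left cosets of $\langle a\rangle$ and $\langle t\rangle$. $\Lambda_{m,n}$ has one vertex per $a$-line or $t$-line (of type $a$ or $t$ respectively), adjacent when the lines intersect. $T$ is the Bass–Serre tree: its vertices are the $a$-lines (identified with type-$a$ vertices of $\Lambda_{m,n}$), with one edge, oriented from $\ell$ to $\ell'$, for each pair of $a$-lines $(\ell,\ell')$ such that $gt\in\ell'$ for some $g\in\ell$. Partial order on vertices of $T$ (hence on type-$a$ vertices): $v_1\le v_2$ if every edge on the geodesic from $v_1$ to $v_2$ is oriented from $v_1$ toward $v_2$; $u<u'$ means $u\le u'$ and $u\ne u'$. $d_T$ is the combinatorial distance in $T$. *)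

theory Defs
  imports Main
begin

text \<open>Words over the generators a, t and their inverses. A letter is a pair
(generator, is_inverse).\<close>

datatype gen = GA | GT

type_synonym word = "(gen \<times> bool) list"

definition gpow :: "gen \<Rightarrow> int \<Rightarrow> word" where
  "gpow s k = (if k \<ge> 0 then replicate (nat k) (s, False) else replicate (nat (- k)) (s, True))"

abbreviation apow :: "int \<Rightarrow> word" where "apow k \<equiv> gpow GA k"
abbreviation tpow :: "int \<Rightarrow> word" where "tpow k \<equiv> gpow GT k"

text \<open>Equality in BS(m,n) = <a,t | t a^m t^-1 = a^n>: the congruence on words
generated by free cancellation and the defining relator.\<close>

inductive bs_eq :: "int \<Rightarrow> int \<Rightarrow> word \<Rightarrow> word \<Rightarrow> bool" for m n where
  refl: "bs_eq m n w w"
| sym: "bs_eq m n v w \<Longrightarrow> bs_eq m n w v"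
| trans: "bs_eq m n u v \<Longrightarrow> bs_eq m n v w \<Longrightarrow> bs_eq m n u w"
| ctx: "bs_eq m n v w \<Longrightarrow> bs_eq m n (x @ v @ y) (x @ w @ y)"
| cancel: "bs_eq m n [(s, b), (s, \<not> b)] []"
| rel: "bs_eq m n ([(GT, False)] @ apow m @ [(GT, True)]) (apow n)"

text \<open>A group element (vertex of the Cayley graph) is represented by the set of
all words representing it.\<close>

definition elt :: "int \<Rightarrow> int \<Rightarrow> word \<Rightarrow> word set" where
  "elt m n g = {w. bs_eq m n g w}"

text \<open>a-lines and t-lines: left cosets g<a>, g<t>, as sets of words (unions of
group elements). Two lines intersect iff these sets intersect.\<close>

definition aline :: "int \<Rightarrow> int \<Rightarrow> word \<Rightarrow> word set" where
  "aline m n g = {w. \<exists>k::int. bs_eq m n (g @ apow k) w}"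

definition tline :: "int \<Rightarrow> int \<Rightarrow> word \<Rightarrow> word set" where
  "tline m n g = {w. \<exists>k::int. bs_eq m n (g @ tpow k) w}"

definition alines :: "int \<Rightarrow> int \<Rightarrow> word set set" where
  "alines m n = range (aline m n)"

definition tlines :: "int \<Rightarrow> int \<Rightarrow> word set set" where
  "tlines m n = range (tline m n)"

text \<open>Bass--Serre tree: vertices are a-lines; an edge oriented from L to L'
iff g t \<in> L' for some g \<in> L.\<close>

definition bs_edge :: "int \<Rightarrow> int \<Rightarrow> word set \<Rightarrow> word set \<Rightarrow> bool" where
  "bs_edge m n L L' \<longleftrightarrow> L \<in> alines m n \<and> L' \<in> alines m n \<and>
     (\<exists>g \<in> L. g @ [(GT, False)] \<in> L')"

definition bs_adj :: "int \<Rightarrow> int \<Rightarrow> word set \<Rightarrow> word set \<Rightarrow> bool" where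
  "bs_adj m n L L' \<longleftrightarrow> bs_edge m n L L' \<or> bs_edge m n L' L"

text \<open>A path in T from L to L' (as list of vertices); its length is the number
of edges, i.e. length xs - 1.\<close>

definition bs_path :: "int \<Rightarrow> int \<Rightarrow> word set list \<Rightarrow> word set \<Rightarrow> word set \<Rightarrow> bool" where
  "bs_path m n xs L L' \<longleftrightarrow> xs \<noteq> [] \<and> hd xs = L \<and> last xs = L' \<and>
     set xs \<subseteq> alines m n \<and>
     (\<forall>i. Suc i < length xs \<longrightarrow> bs_adj m n (xs ! i) (xs ! Suc i))"

definition bs_dist :: "int \<Rightarrow> int \<Rightarrow> word set \<Rightarrow> word set \<Rightarrow> nat" where
  "bs_dist m n L L' = (LEAST k. \<exists>xs. bs_path m n xs L L' \<and> length xs = Suc k)"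

definition bs_geodesic :: "int \<Rightarrow> int \<Rightarrow> word set list \<Rightarrow> word set \<Rightarrow> word set \<Rightarrow> bool" where
  "bs_geodesic m n xs L L' \<longleftrightarrow> bs_path m n xs L L' \<and> length xs = Suc (bs_dist m n L L')"

definition bs_le :: "int \<Rightarrow> int \<Rightarrow> word set \<Rightarrow> word set \<Rightarrow> bool" where
  "bs_le m n L L' \<longleftrightarrow> L \<in> alines m n \<and> L' \<in> alines m n \<and>
     (\<forall>xs. bs_geodesic m n xs L L' \<longrightarrow>
        (\<forall>i. Suc i < length xs \<longrightarrow> bs_edge m n (xs ! i) (xs ! Suc i)))"

definition bs_less :: "int \<Rightarrow> int \<Rightarrow> word set \<Rightarrow> word set \<Rightarrow> bool" where
  "bs_less m n L L' \<longleftrightarrow> bs_le m n L L' \<and> L \<noteq> L'"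

end

theory Submission
  imports Defs
begin


context fixes m n :: int begin

abbreviation E (infix "\<approx>" 50) where "x \<approx> y \<equiv> bs_eq m n x y"

lemma eq_refl: "x \<approx> x" by (rule bs_eq.refl)
lemma eq_sym: "x \<approx> y \<Longrightarrow> y \<approx> x" by (rule bs_eq.sym)
lemma eq_trans: "x \<approx> y \<Longrightarrow> y \<approx> z \<Longrightarrow> x \<approx> z" by (rule bs_eq.trans)

lemma ctxL: "v \<approx> w \<Longrightarrow> x @ v \<approx> x @ w"
  using bs_eq.ctx[of m n v w x "[]"] by simp
lemma ctxR: "v \<approx> w \<Longrightarrow> v @ y \<approx> w @ y"
  using bs_eq.ctx[of m n v w "[]" y] by simp
lemma cong_app: "v \<approx> w \<Longrightarrow> v' \<approx> w' \<Longrightarrow> v @ v' \<approx> w @ w'"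
  by (meson ctxL ctxR eq_trans)

fun winv :: "word \<Rightarrow> word" where
  "winv [] = []"
| "winv ((s,b)#w) = winv w @ [(s, \<not>b)]"

lemma cancel2: "[(s,b),(s,\<not>b)] \<approx> []" by (rule bs_eq.cancel)
lemma cancel2': "[(s,\<not>b),(s,b)] \<approx> []" using bs_eq.cancel[of m n s "\<not>b"] by simp

lemma winv_r: "w @ winv w \<approx> []"
proof (induction w)
  case Nil then show ?case by (simp add: eq_refl)
next
  case (Cons x w)
  obtain s b where x: "x = (s,b)" by force
  have "[x] @ (w @ winv w) @ [(s,\<not>b)] \<approx> [x] @ [] @ [(s,\<not>b)]"
    using bs_eq.ctx[OF Cons.IH] by blast
  then show ?case using x cancel2[of s b] eq_trans by auto
qed

lemma winv_l: "winv w @ w \<approx> []"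
proof (induction w)
  case Nil then show ?case by (simp add: eq_refl)
next
  case (Cons x w)
  obtain s b where x: "x = (s,b)" by force
  have "winv w @ [(s,\<not>b),(s,b)] @ w \<approx> winv w @ [] @ w"
    using bs_eq.ctx[OF cancel2'[of s b]] by blast
  then show ?case using x Cons.IH eq_trans by auto
qed

lemma cancel_left: assumes "u @ x \<approx> u @ y" shows "x \<approx> y"
proof -
  have "winv u @ (u @ x) \<approx> winv u @ (u @ y)" using ctxL[OF assms] .
  moreover have "winv u @ (u @ x) \<approx> x" using ctxR[OF winv_l[of u], of x] by simp
  moreover have "winv u @ (u @ y) \<approx> y" using ctxR[OF winv_l[of u], of y] by simp
  ultimately show ?thesis by (meson eq_sym eq_trans)
qed

lemma cancel_right: assumes "x @ u \<approx> y @ u" shows "x \<approx> y"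
proof -
  have "(x @ u) @ winv u \<approx> (y @ u) @ winv u" using ctxR[OF assms] .
  moreover have "x @ (u @ winv u) \<approx> x" using ctxL[OF winv_r[of u], of x] by simp
  moreover have "y @ (u @ winv u) \<approx> y" using ctxL[OF winv_r[of u], of y] by simp
  ultimately show ?thesis by (metis append_assoc eq_sym eq_trans)
qed

lemma rep_cancel: "replicate a (s,b) @ replicate c (s,\<not>b) \<approx> replicate (a - c) (s,b) @ replicate (c - a) (s,\<not>b)"
proof (induction a arbitrary: c)
  case 0 then show ?case by (simp add: eq_refl)
next
  case (Suc a)
  show ?case
  proof (cases c)
    case 0 then show ?thesis by (simp add: eq_refl)
  next
    case (Suc c')
    have "replicate (Suc a) (s,b) @ replicate (Suc c') (s,\<not>b)
        = replicate a (s,b) @ [(s,b),(s,\<not>b)] @ replicate c' (s,\<not>b)"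
      by (simp add: replicate_append_same[symmetric])
    moreover have "replicate a (s,b) @ [(s,b),(s,\<not>b)] @ replicate c' (s,\<not>b) \<approx>
        replicate a (s,b) @ [] @ replicate c' (s,\<not>b)"
      using bs_eq.ctx[OF cancel2] by blast
    ultimately show ?thesis using Suc.IH[of c'] Suc eq_trans by auto
  qed
qed

lemma gpow_add: "gpow s i @ gpow s j \<approx> gpow s (i + j)"
proof -
  consider "i \<ge> 0" "j \<ge> 0" | "i \<ge> 0" "j < 0" | "i < 0" "j \<ge> 0" | "i < 0" "j < 0" by linarith
  then show ?thesis
  proof cases
    case 1
    then show ?thesis by (simp add: gpow_def replicate_add[symmetric] nat_add_distrib eq_refl)
  next
    case 2
    have "gpow s i @ gpow s j \<approx> replicate (nat i - nat (-j)) (s,False) @ replicate (nat (-j) - nat i) (s,\<not>False)"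
      using rep_cancel[of "nat i" s False "nat (-j)"] 2 by (simp add: gpow_def)
    moreover have "replicate (nat i - nat (-j)) (s,False) @ replicate (nat (-j) - nat i) (s,\<not>False) = gpow s (i+j)"
      using 2 by (auto simp: gpow_def nat_diff_distrib')
    ultimately show ?thesis by simp
  next
    case 3
    have "gpow s i @ gpow s j \<approx> replicate (nat (-i) - nat j) (s,True) @ replicate (nat j - nat (-i)) (s,\<not>True)"
      using rep_cancel[of "nat (-i)" s True "nat j"] 3 by (simp add: gpow_def)
    moreover have "replicate (nat (-i) - nat j) (s,True) @ replicate (nat j - nat (-i)) (s,\<not>True) = gpow s (i+j)"
      using 3 by (auto simp: gpow_def nat_diff_distrib')
    ultimately show ?thesis by simp
  next
    case 4
    have "nat (-i) + nat (-j) = nat (-(i+j))" using 4 by simp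
    then show ?thesis using 4 by (simp add: gpow_def replicate_add[symmetric] eq_refl)
  qed
qed

lemma gpow0[simp]: "gpow s 0 = []" by (simp add: gpow_def)

end


lemma dvd_step: assumes "\<bar>n\<bar> = h * q" "h * q ^ Suc (Suc d) dvd (s::int)" "s = n * c" "h > 0" "q \<noteq> 0"
  shows "q ^ Suc d dvd c"
proof -
  have "h * q ^ Suc (Suc d) dvd \<bar>s\<bar>" using assms(2) by simp
  moreover have "\<bar>s\<bar> = (h * q) * \<bar>c\<bar>" using assms(1,3) by (simp add: abs_mult)
  moreover have "h * q ^ Suc (Suc d) = (h * q) * q ^ Suc d" by (simp add: mult_ac)
  ultimately have "(h * q) * q ^ Suc d dvd (h * q) * \<bar>c\<bar>" by simp
  then have "q ^ Suc d dvd \<bar>c\<bar>" using assms(4,5) by (subst (asm) dvd_mult_cancel_left) auto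
  then show ?thesis by simp
qed

lemma dvd_base: assumes "h * q ^ Suc 0 dvd (s::int)" "\<bar>n\<bar> = h * q" shows "n dvd s"
proof -
  have "\<bar>n\<bar> dvd s" using assms by simp
  then show "n dvd s" by simp
qed

lemma dvd_base2: assumes "h * q ^ Suc (Suc d) dvd (s::int)" "\<bar>n\<bar> = h * q" shows "n dvd s"
proof -
  have "h * q dvd h * q ^ Suc (Suc d)" by simp
  then have "\<bar>n\<bar> dvd s" using assms dvd_trans by metis
  then show "n dvd s" by simp
qed

context fixes m n :: int begin

abbreviation E2 (infix "\<approx>" 50) where "x \<approx> y \<equiv> bs_eq m n x y"

lemmas [trans] = eq_trans[of m n]

lemma aT: "apow n @ [(GT,False)] \<approx> [(GT,False)] @ apow m"
proof -
  have c: "[(GT,True),(GT,False)] \<approx> []" using cancel2'[of m n GT False] by simp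
  have "[(GT,False)] @ apow m @ [] \<approx> [(GT,False)] @ apow m @ [(GT,True),(GT,False)]"
    using bs_eq.ctx[OF eq_sym[OF c], of "[(GT,False)] @ apow m" "[]"] by simp
  then have X: "[(GT,False)] @ apow m \<approx> ([(GT,False)] @ apow m @ [(GT,True)]) @ [(GT,False)]" by simp
  have "([(GT,False)] @ apow m @ [(GT,True)]) @ [(GT,False)] \<approx> apow n @ [(GT,False)]"
    using ctxR[OF bs_eq.rel] .
  then show ?thesis using X by (meson eq_sym eq_trans)
qed

lemma conj_neg: assumes "apow x @ [c] \<approx> [c] @ apow y" shows "apow (-x) @ [c] \<approx> [c] @ apow (-y)"
proof -
  have "apow x @ (apow (-x) @ [c]) \<approx> [c]"
    using ctxR[OF gpow_add[of m n GA x "-x"], of "[c]"] by simp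
  moreover have "apow x @ ([c] @ apow (-y)) \<approx> [c]"
  proof -
    have "(apow x @ [c]) @ apow (-y) \<approx> ([c] @ apow y) @ apow (-y)" using ctxR[OF assms] .
    moreover have "[c] @ (apow y @ apow (-y)) \<approx> [c]"
      using ctxL[OF gpow_add[of m n GA y "-y"], of "[c]"] by simp
    ultimately show ?thesis by (metis append_assoc eq_trans)
  qed
  ultimately show ?thesis by (meson cancel_left eq_sym eq_trans)
qed

lemma conj_mul_nat: assumes "apow x @ [c] \<approx> [c] @ apow y" shows "apow (x * int k) @ [c] \<approx> [c] @ apow (y * int k)"
proof (induction k)
  case 0 then show ?case by (simp add: eq_refl)
next
  case (Suc k)
  have "apow (x * int (Suc k)) @ [c] \<approx> (apow x @ apow (x * int k)) @ [c]"
    using ctxR[OF eq_sym[OF gpow_add[of m n GA x "x * int k"]], of "[c]"] by (simp add: algebra_simps)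
  also have "(apow x @ apow (x * int k)) @ [c] \<approx> apow x @ ([c] @ apow (y * int k))"
    using ctxL[OF Suc.IH] by simp
  also have "apow x @ ([c] @ apow (y * int k)) \<approx> ([c] @ apow y) @ apow (y * int k)"
    using ctxR[OF assms] by simp
  also have "([c] @ apow y) @ apow (y * int k) \<approx> [c] @ apow (y * int (Suc k))"
    using ctxL[OF gpow_add[of m n GA y "y * int k"], of "[c]"] by (simp add: algebra_simps)
  finally show ?case .
qed

lemma conj_mul: assumes "apow x @ [c] \<approx> [c] @ apow y" shows "apow (x * k) @ [c] \<approx> [c] @ apow (y * k)"
proof (cases "k \<ge> 0")
  case True
  then show ?thesis using conj_mul_nat[OF assms, of "nat k"] by simp
next
  case False
  then have "apow (- (x * int (nat (-k)))) @ [c] \<approx> [c] @ apow (- (y * int (nat (-k))))"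
    using conj_neg[OF conj_mul_nat[OF assms]] by blast
  then show ?thesis using False by simp
qed

lemma aT_mul: "apow (n * c) @ [(GT,False)] \<approx> [(GT,False)] @ apow (m * c)"
  using conj_mul[OF aT] .

lemma aT'_mul: "apow (m * c) @ [(GT,True)] \<approx> [(GT,True)] @ apow (n * c)"
proof -
  have c1: "[(GT,False),(GT,True)] \<approx> []" using cancel2[of m n GT False] by simp
  have c2: "[(GT,True),(GT,False)] \<approx> []" using cancel2'[of m n GT False] by simp
  have "[(GT,True)] @ (apow (n * c) @ [(GT,False)]) @ [(GT,True)] \<approx> [(GT,True)] @ ([(GT,False)] @ apow (m * c)) @ [(GT,True)]"
    using bs_eq.ctx[OF aT_mul[of c], where x="[(GT,True)]" and y="[(GT,True)]"] .
  then have H1: "[(GT,True)] @ apow (n * c) @ [(GT,False),(GT,True)] \<approx> [(GT,True),(GT,False)] @ apow (m * c) @ [(GT,True)]"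
    by simp
  have H2: "[(GT,True)] @ apow (n * c) @ [(GT,False),(GT,True)] \<approx> [(GT,True)] @ apow (n * c)"
    using ctxL[OF c1, of "[(GT,True)] @ apow (n * c)"] by simp
  have H3: "[(GT,True),(GT,False)] @ apow (m * c) @ [(GT,True)] \<approx> apow (m * c) @ [(GT,True)]"
    using ctxR[OF c2, of "apow (m * c) @ [(GT,True)]"] by simp
  show ?thesis using eq_trans[OF eq_trans[OF eq_sym[OF H3] eq_sym[OF H1]] H2] .
qed

context fixes h p q :: int
  assumes hpos: "h > 0" and mh: "\<bar>m\<bar> = h * p" and nh: "\<bar>n\<bar> = h * q" and mn0: "m \<noteq> 0" "n \<noteq> 0"
begin

lemma if_up: "h * q ^ Suc d dvd s \<Longrightarrow> \<exists>r. apow s @ replicate (Suc d) (GT,False) \<approx> replicate (Suc d) (GT,False) @ apow r"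
proof (induction d arbitrary: s)
  case 0
  then have "n dvd s" using nh by (rule dvd_base)
  then obtain c where "s = n * c" by blast
  then show ?case using aT_mul[of c] by auto
next
  case (Suc d)
  have "n dvd s" using Suc.prems nh by (rule dvd_base2)
  then obtain c where sc: "s = n * c" by blast
  have q0: "q \<noteq> 0" using nh mn0 by auto
  have "q ^ Suc d dvd c" using dvd_step[OF nh Suc.prems sc hpos q0] .
  moreover have "h dvd m" proof - have "h dvd \<bar>m\<bar>" using mh by simp then show ?thesis by simp qed
  ultimately have "h * q ^ Suc d dvd m * c" by (metis mult_dvd_mono mult.commute)
  then obtain r where r: "apow (m * c) @ replicate (Suc d) (GT,False) \<approx> replicate (Suc d) (GT,False) @ apow r"
    using Suc.IH by blast
  have "apow s @ replicate (Suc (Suc d)) (GT,False) = (apow (n * c) @ [(GT,False)]) @ replicate (Suc d) (GT,False)"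
    using sc by simp
  also have "\<dots> \<approx> [(GT,False)] @ (apow (m * c) @ replicate (Suc d) (GT,False))"
    using ctxR[OF aT_mul] by simp
  also have "\<dots> \<approx> [(GT,False)] @ (replicate (Suc d) (GT,False) @ apow r)"
    using ctxL[OF r] .
  finally show ?case by auto
qed

lemma if_down: "h * p ^ Suc d dvd s \<Longrightarrow> \<exists>r. apow s @ replicate (Suc d) (GT,True) \<approx> replicate (Suc d) (GT,True) @ apow r"
proof (induction d arbitrary: s)
  case 0
  then have "m dvd s" using mh by (rule dvd_base)
  then obtain c where "s = m * c" by blast
  then show ?case using aT'_mul[of c] by auto
next
  case (Suc d)
  have "m dvd s" using Suc.prems mh by (rule dvd_base2)
  then obtain c where sc: "s = m * c" by blast
  have p0: "p \<noteq> 0" using mh mn0 by auto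
  have "p ^ Suc d dvd c" using dvd_step[OF mh Suc.prems sc hpos p0] .
  moreover have "h dvd n" proof - have "h dvd \<bar>n\<bar>" using nh by simp then show ?thesis by simp qed
  ultimately have "h * p ^ Suc d dvd n * c" by (metis mult_dvd_mono mult.commute)
  then obtain r where r: "apow (n * c) @ replicate (Suc d) (GT,True) \<approx> replicate (Suc d) (GT,True) @ apow r"
    using Suc.IH by blast
  have "apow s @ replicate (Suc (Suc d)) (GT,True) = (apow (m * c) @ [(GT,True)]) @ replicate (Suc d) (GT,True)"
    using sc by simp
  also have "\<dots> \<approx> [(GT,True)] @ (apow (n * c) @ replicate (Suc d) (GT,True))"
    using ctxR[OF aT'_mul] by simp
  also have "\<dots> \<approx> [(GT,True)] @ (replicate (Suc d) (GT,True) @ apow r)"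
    using ctxL[OF r] .
  finally show ?case by auto
qed

end
end


type_synonym nf = "(bool \<times> int) list"

fun act :: "int \<Rightarrow> int \<Rightarrow> int \<Rightarrow> nf \<Rightarrow> nf" where
  "act m n k [] = []"
| "act m n k ((b, r) # rest) =
     (if b then (True, (r + k) mod m) # act m n (n * ((r + k) div m)) rest
      else (False, (r + k) mod n) # act m n (m * ((r + k) div n)) rest)"

definition tact :: "nf \<Rightarrow> nf" where
  "tact x = (case x of (True, r) # rest \<Rightarrow> if r = 0 then rest else (False, 0) # x | _ \<Rightarrow> (False, 0) # x)"

definition tinv :: "nf \<Rightarrow> nf" where
  "tinv x = (case x of (False, r) # rest \<Rightarrow> if r = 0 then rest else (True, 0) # x | _ \<Rightarrow> (True, 0) # x)"

fun valid :: "int \<Rightarrow> int \<Rightarrow> nf \<Rightarrow> bool" where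
  "valid m n [] = True"
| "valid m n ((b, r) # rest) = (r mod (if b then m else n) = r \<and> valid m n rest \<and> (rest = [] \<or> hd rest \<noteq> (\<not> b, 0)))"

fun gact :: "int \<Rightarrow> int \<Rightarrow> gen \<times> bool \<Rightarrow> nf \<Rightarrow> nf" where
  "gact m n (GA, b) = act m n (if b then -1 else 1)"
| "gact m n (GT, b) = (if b then tinv else tact)"

definition interp :: "int \<Rightarrow> int \<Rightarrow> word \<Rightarrow> nf \<Rightarrow> nf" where
  "interp m n w x = foldr (gact m n) w x"

lemma interp_append: "interp m n (u @ v) x = interp m n u (interp m n v x)"
  by (simp add: interp_def)
lemma interp_Nil[simp]: "interp m n [] x = x" by (simp add: interp_def)
lemma interp_Cons[simp]: "interp m n (s # w) x = gact m n s (interp m n w x)" by (simp add: interp_def)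

lemma divmod_aux: "((a::int) mod M + k) div M + a div M = (a + k) div M"
proof -
  have "a + k = (a mod M + k) + M * (a div M)" by simp
  then show ?thesis
    by (metis add.commute div_mult_self2 div_by_0 mod_by_0 mult_zero_left add_cancel_right_left)
qed

lemma act_comp: "act m n k1 (act m n k2 x) = act m n (k1 + k2) x"
proof (induction x arbitrary: k1 k2)
  case Nil then show ?case by simp
next
  case (Cons y rest)
  obtain b r where y: "y = (b, r)" by force
  show ?case
  proof (cases b)
    case True
    have e1: "((r + k2) mod m + k1) mod m = (r + (k1 + k2)) mod m" using mod_add_left_eq[of "r+k2" m k1] by (simp add: ac_simps)
    have H: "((r + k2) mod m + k1) div m + (r + k2) div m = (r + (k1 + k2)) div m"
      using divmod_aux[of "r + k2" m k1] by (simp add: ac_simps)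
    have e2: "n * (((r + k2) mod m + k1) div m) + n * ((r + k2) div m) = n * ((r + (k1 + k2)) div m)"
      by (metis H distrib_left)
    show ?thesis using True y Cons.IH e1 e2 by simp
  next
    case False
    have e1: "((r + k2) mod n + k1) mod n = (r + (k1 + k2)) mod n" using mod_add_left_eq[of "r+k2" n k1] by (simp add: ac_simps)
    have H: "((r + k2) mod n + k1) div n + (r + k2) div n = (r + (k1 + k2)) div n"
      using divmod_aux[of "r + k2" n k1] by (simp add: ac_simps)
    have e2: "m * (((r + k2) mod n + k1) div n) + m * ((r + k2) div n) = m * ((r + (k1 + k2)) div n)"
      by (metis H distrib_left)
    show ?thesis using False y Cons.IH e1 e2 by simp
  qed
qed

lemma act0: "m \<noteq> 0 \<Longrightarrow> n \<noteq> 0 \<Longrightarrow> valid m n x \<Longrightarrow> act m n 0 x = x"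
proof (induction x)
  case Nil then show ?case by simp
next
  case (Cons y rest)
  obtain b r where y: "y = (b, r)" by force
  show ?case
  proof (cases b)
    case True
    then have "r mod m = r" using Cons.prems y by simp
    then have "r div m = 0" using Cons.prems(1)
      by (metis add_cancel_right_left div_mult_mod_eq mult_eq_0_iff)
    then show ?thesis using Cons y True \<open>r mod m = r\<close> by simp
  next
    case False
    then have "r mod n = r" using Cons.prems y by simp
    then have "r div n = 0" using Cons.prems(2)
      by (metis add_cancel_right_left div_mult_mod_eq mult_eq_0_iff)
    then show ?thesis using Cons y False \<open>r mod n = r\<close> by simp
  qed
qed

lemma act_head: "act m n k ((b, r) # rest) = (b, (r + k) mod (if b then m else n)) # act m n ((if b then n else m) * ((r + k) div (if b then m else n))) rest"
  by simp

lemma act_ne: "rest \<noteq> [] \<Longrightarrow> act m n k rest \<noteq> []"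
  by (cases rest) (auto split: if_splits)

lemma act_hd_fst: "rest \<noteq> [] \<Longrightarrow> fst (hd (act m n k rest)) = fst (hd rest)"
  by (cases rest) (auto split: if_splits)

lemma act_valid: "valid m n x \<Longrightarrow> valid m n (act m n k x)"
proof (induction x arbitrary: k)
  case Nil then show ?case by simp
next
  case (Cons y rest)
  obtain b r where y: "y = (b, r)" by force
  define M where "M = (if b then m else n)"
  define N where "N = (if b then n else m)"
  define k' where "k' = N * ((r + k) div M)"
  have A: "act m n k (y # rest) = (b, (r + k) mod M) # act m n k' rest"
    using y by (simp add: M_def N_def k'_def)
  have vr: "valid m n rest" using Cons.prems y by simp
  have hdok: "rest = [] \<or> hd rest \<noteq> (\<not> b, 0)" using Cons.prems y by simp
  have "act m n k' rest = [] \<or> hd (act m n k' rest) \<noteq> (\<not> b, 0)"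
  proof (cases rest)
    case Nil then show ?thesis by simp
  next
    case (Cons z rest')
    obtain b' r' where z: "z = (b', r')" by force
    show ?thesis
    proof (cases "b' = (\<not> b)")
      case False then show ?thesis using Cons z by simp
    next
      case True
      have r'ne: "r' \<noteq> 0" using hdok Cons z True by simp
      have r'm: "r' mod (if b' then m else n) = r'" using vr Cons z by simp
      have "(r' + k') mod (if b' then m else n) = r' mod (if b' then m else n)"
        using True by (cases b) (simp_all add: k'_def N_def)
      moreover have "act m n k' rest = (b', (r' + k') mod (if b' then m else n)) # act m n ((if b' then n else m) * ((r' + k') div (if b' then m else n))) rest'"
        using Cons z by (simp only: act_head)
      ultimately show ?thesis using True r'ne r'm by simp
    qed
  qed
  then show ?case using A Cons.IH[OF vr, of k'] M_def by simp
qed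

lemma tact_valid: "valid m n x \<Longrightarrow> valid m n (tact x)"
  by (cases x) (auto simp: tact_def split: if_splits list.splits prod.splits bool.splits)

lemma tinv_valid: "valid m n x \<Longrightarrow> valid m n (tinv x)"
  by (cases x) (auto simp: tinv_def split: if_splits list.splits prod.splits bool.splits)

lemma tact_tinv: "valid m n x \<Longrightarrow> tact (tinv x) = x"
  by (cases x) (auto simp: tact_def tinv_def split: if_splits list.splits prod.splits bool.splits)

lemma tinv_tact: "valid m n x \<Longrightarrow> tinv (tact x) = x"
  by (cases x) (auto simp: tact_def tinv_def split: if_splits list.splits prod.splits bool.splits)



lemma dvd_step2: fixes m n h p q c k :: int
  assumes "\<bar>m\<bar> = h * p" "\<bar>n\<bar> = h * q" "coprime p q" "h > 0" "h * q ^ Suc d dvd m * c" "k = n * c"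
  shows "h * q ^ Suc (Suc d) dvd k"
proof -
  have "h * q ^ Suc d dvd \<bar>m * c\<bar>" using assms(5) by simp
  then have "h * q ^ Suc d dvd h * (p * \<bar>c\<bar>)" using assms(1) by (simp add: abs_mult mult.assoc)
  then have "q ^ Suc d dvd p * \<bar>c\<bar>" using assms(4) by simp
  moreover have "coprime (q ^ Suc d) p" using assms(3) by (simp add: coprime_commute)
  ultimately have "q ^ Suc d dvd \<bar>c\<bar>" using coprime_dvd_mult_right_iff by blast
  then have A: "(h * q) * q ^ Suc d dvd (h * q) * \<bar>c\<bar>" by (rule mult_dvd_mono[OF dvd_refl])
  have B: "(h * q) * \<bar>c\<bar> = \<bar>k\<bar>" using assms(2,6) by (simp add: abs_mult)
  have C: "h * q ^ Suc (Suc d) = (h * q) * q ^ Suc d" by (simp add: mult_ac)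
  have "(h * q) * q ^ Suc d dvd \<bar>k\<bar>" using A B by metis
  then have "(h * q) * q ^ Suc d dvd k" by (simp only: dvd_abs_iff)
  then show ?thesis using C by metis
qed

lemma gact_valid: assumes "valid m n x" shows "valid m n (gact m n s x)"
proof -
  obtain g b where "s = (g, b)" by force
  then show ?thesis using assms by (cases g) (auto intro: act_valid tact_valid tinv_valid)
qed

lemma interp_valid: "valid m n x \<Longrightarrow> valid m n (interp m n w x)"
  by (induction w) (auto intro: gact_valid)

context fixes m n :: int assumes m0: "m \<noteq> 0" and n0: "n \<noteq> 0" begin

lemma interp_repA: "valid m n x \<Longrightarrow> interp m n (replicate j (GA, b)) x = act m n (if b then - int j else int j) x"
proof (induction j)
  case 0 then show ?case using act0[OF m0 n0] by simp
next
  case (Suc j)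
  then show ?case by (simp add: act_comp algebra_simps)
qed

lemma interp_apow: "valid m n x \<Longrightarrow> interp m n (apow k) x = act m n k x"
  by (simp add: gpow_def interp_repA)

lemma rel_act: assumes "valid m n x" shows "tact (act m n m (tinv x)) = act m n n x"
proof (cases "x \<noteq> [] \<and> hd x = (False, 0)")
  case True
  then obtain rest where x: "x = (False, 0) # rest" by (cases x) auto
  have vr: "valid m n rest" and hr: "rest = [] \<or> hd rest \<noteq> (True, 0)" using assms x by auto
  have ti: "tinv x = rest" using x by (simp add: tinv_def)
  have "act m n m rest = [] \<or> fst (hd (act m n m rest)) = False \<or> (\<exists>r' rest'. act m n m rest = (True, r') # rest' \<and> r' \<noteq> 0)"
  proof (cases rest)
    case Nil then show ?thesis by simp
  next
    case (Cons z rest')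
    obtain b' r' where z: "z = (b', r')" by force
    show ?thesis
    proof (cases b')
      case False then show ?thesis using Cons z by simp
    next
      case True
      have "r' \<noteq> 0" using hr Cons z True by simp
      moreover have "r' mod m = r'" using vr Cons z True by simp
      moreover have "(r' + m) mod m = r' mod m" by simp
      ultimately show ?thesis using Cons z True by simp
    qed
  qed
  then have "tact (act m n m rest) = (False, 0) # act m n m rest"
    by (auto simp: tact_def split: list.splits prod.splits bool.splits)
  moreover have "act m n n x = (False, 0) # act m n m rest" using x n0 by simp
  ultimately show ?thesis using ti by simp
next
  case False
  then have "tinv x = (True, 0) # x" by (auto simp: tinv_def split: list.splits prod.splits bool.splits)
  then have "act m n m (tinv x) = (True, 0) # act m n n x" using m0 by simp
  then show ?thesis by (simp add: tact_def)
qed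

lemma sound: "bs_eq m n v w \<Longrightarrow> valid m n x \<Longrightarrow> interp m n v x = interp m n w x"
proof (induction arbitrary: x rule: bs_eq.induct)
  case (refl w) then show ?case by simp
next
  case (sym v w) then show ?case by simp
next
  case (trans u v w) then show ?case by simp
next
  case (ctx v w x y)
  then show ?case using interp_valid by (simp add: interp_append)
next
  case (cancel s b)
  show ?case
  proof (cases s)
    case GA
    then show ?thesis using cancel act_comp act0[OF m0 n0] by auto
  next
    case GT
    then show ?thesis using cancel tact_tinv tinv_tact by auto
  qed
next
  case rel
  then show ?case using interp_apow rel_act tinv_valid by (simp add: interp_append)
qed

lemma interp_repT: "interp m n (replicate d (GT, False)) [] = replicate d (False, 0)"
proof -
  have t: "tact (replicate d (False, 0)) = (False, 0) # replicate d (False, 0)" for d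
    by (cases d) (auto simp: tact_def)
  show ?thesis by (induction d) (auto simp: t)
qed

lemma interp_repT': "interp m n (replicate d (GT, True)) [] = replicate d (True, 0)"
proof -
  have t: "tinv (replicate d (True, 0)) = (True, 0) # replicate d (True, 0)" for d
    by (cases d) (auto simp: tinv_def)
  show ?thesis by (induction d) (auto simp: t)
qed

context fixes h p q :: int
  assumes hpos: "h > 0" and mh: "\<bar>m\<bar> = h * p" and nh: "\<bar>n\<bar> = h * q" and cop: "coprime p q"
begin

lemma only_up: "act m n k (replicate (Suc d) (False, 0)) = replicate (Suc d) (False, 0) \<Longrightarrow> h * q ^ Suc d dvd k"
proof (induction d arbitrary: k)
  case 0
  then have "k mod n = 0" by simp
  then have "n dvd k" by auto
  then have "\<bar>n\<bar> dvd k" by simp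
  then show ?case using nh by simp
next
  case (Suc d)
  then have "k mod n = 0" and a: "act m n (m * (k div n)) (replicate (Suc d) (False, 0)) = replicate (Suc d) (False, 0)"
    by simp_all
  then have kc: "k = n * (k div n)" by auto
  have "h * q ^ Suc d dvd m * (k div n)" using Suc.IH[OF a] .
  then show ?case using dvd_step2[OF mh nh cop hpos _ kc] by blast
qed

lemma only_down: "act m n k (replicate (Suc d) (True, 0)) = replicate (Suc d) (True, 0) \<Longrightarrow> h * p ^ Suc d dvd k"
proof (induction d arbitrary: k)
  case 0
  then have "k mod m = 0" by simp
  then have "m dvd k" by auto
  then have "\<bar>m\<bar> dvd k" by simp
  then show ?case using mh by simp
next
  case (Suc d)
  then have "k mod m = 0" and a: "act m n (n * (k div m)) (replicate (Suc d) (True, 0)) = replicate (Suc d) (True, 0)"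
    by simp_all
  then have kc: "k = m * (k div m)" by auto
  have "h * p ^ Suc d dvd n * (k div m)" using Suc.IH[OF a] .
  moreover have "coprime q p" using cop by (simp add: coprime_commute)
  ultimately show ?case using dvd_step2[OF nh mh _ hpos _ kc] by blast
qed

end
end


definition ht :: "word \<Rightarrow> int" where
  "ht w = sum_list (map (\<lambda>(s, b). if s = GT then (if b then -1 else 1) else 0) w)"

lemma ht_append[simp]: "ht (u @ v) = ht u + ht v" by (simp add: ht_def)
lemma ht_Nil[simp]: "ht [] = 0" by (simp add: ht_def)
lemma ht_Cons[simp]: "ht ((s, b) # w) = (if s = GT then (if b then -1 else 1) else 0) + ht w" by (simp add: ht_def)
lemma ht_apow[simp]: "ht (apow k) = 0" by (simp add: ht_def gpow_def sum_list_replicate)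
lemma ht_tpow[simp]: "ht (tpow k) = k" by (simp add: ht_def gpow_def sum_list_replicate)

lemma ht_cong: "bs_eq m n v w \<Longrightarrow> ht v = ht w"
  by (induction rule: bs_eq.induct) auto

definition Ht :: "word set \<Rightarrow> int" where "Ht L = ht (SOME w. w \<in> L)"

context fixes m n :: int begin

abbreviation E3 (infix "\<approx>" 50) where "x \<approx> y \<equiv> bs_eq m n x y"
lemmas [trans] = eq_trans[of m n]

lemma aline_self: "x \<in> aline m n x"
  unfolding aline_def using eq_refl[of m n x] by (metis (mono_tags) gpow0 append_Nil2 mem_Collect_eq)

lemma tline_self: "x \<in> tline m n x"
  unfolding tline_def using eq_refl[of m n x] by (metis (mono_tags) gpow0 append_Nil2 mem_Collect_eq)

lemma aline_close: "w \<in> aline m n x \<Longrightarrow> w \<approx> w' \<Longrightarrow> w' \<in> aline m n x"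
  unfolding aline_def by (auto intro: eq_trans)

lemma tline_close: "w \<in> tline m n x \<Longrightarrow> w \<approx> w' \<Longrightarrow> w' \<in> tline m n x"
  unfolding tline_def by (auto intro: eq_trans)

lemma ht_aline: "w \<in> aline m n x \<Longrightarrow> ht w = ht x"
  unfolding aline_def by (auto dest: ht_cong)

lemma aline_cong: assumes "x \<approx> y" shows "aline m n x = aline m n y"
  unfolding aline_def using assms by (meson ctxR eq_sym eq_trans)

lemma aline_apow: "aline m n (x @ apow i) = aline m n x"
proof
  show "aline m n (x @ apow i) \<subseteq> aline m n x"
  proof
    fix w assume "w \<in> aline m n (x @ apow i)"
    then obtain k where k: "(x @ apow i) @ apow k \<approx> w" unfolding aline_def by blast
    have "x @ apow (i + k) \<approx> x @ (apow i @ apow k)" using ctxL[OF eq_sym[OF gpow_add]] .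
    then have "x @ apow (i + k) \<approx> w" using k by (simp add: eq_trans)
    then show "w \<in> aline m n x" unfolding aline_def by blast
  qed
next
  show "aline m n x \<subseteq> aline m n (x @ apow i)"
  proof
    fix w assume "w \<in> aline m n x"
    then obtain k where k: "x @ apow k \<approx> w" unfolding aline_def by blast
    have "x @ (apow i @ apow (k - i)) \<approx> x @ apow k" using ctxL[OF gpow_add[of m n GA i "k - i"]] by simp
    then have "(x @ apow i) @ apow (k - i) \<approx> w" using k by (simp add: eq_trans)
    then show "w \<in> aline m n (x @ apow i)" unfolding aline_def by blast
  qed
qed

lemma aline_mem_eq: assumes "y \<in> aline m n x" shows "aline m n y = aline m n x"
proof -
  obtain k where "x @ apow k \<approx> y" using assms unfolding aline_def by blast
  then show ?thesis using aline_cong aline_apow by metis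
qed

lemma elt_cong: assumes "x \<approx> y" shows "elt m n x = elt m n y"
proof -
  have "x \<approx> w \<longleftrightarrow> y \<approx> w" for w using assms eq_sym eq_trans by metis
  then show ?thesis unfolding elt_def by blast
qed

lemma tline_link: assumes "y1 \<in> tline m n k" "y2 \<in> tline m n k"
  shows "y2 @ tpow (ht y1 - ht y2) \<approx> y1"
proof -
  obtain j1 where j1: "k @ tpow j1 \<approx> y1" using assms(1) unfolding tline_def by blast
  obtain j2 where j2: "k @ tpow j2 \<approx> y2" using assms(2) unfolding tline_def by blast
  have h1: "ht y1 = ht k + j1" using ht_cong[OF j1] by simp
  have h2: "ht y2 = ht k + j2" using ht_cong[OF j2] by simp
  have "y2 @ tpow (ht y1 - ht y2) \<approx> (k @ tpow j2) @ tpow (j1 - j2)"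
    using ctxR[OF eq_sym[OF j2]] h1 h2 by simp
  also have "(k @ tpow j2) @ tpow (j1 - j2) \<approx> k @ tpow j1"
    using ctxL[OF gpow_add[of m n GT j2 "j1 - j2"], of k] by simp
  also have "k @ tpow j1 \<approx> y1" by (rule j1)
  finally show ?thesis .
qed

lemma inter_elt: assumes "y \<in> aline m n x" "y \<in> tline m n z"
  shows "aline m n x \<inter> tline m n z = elt m n y"
proof
  show "aline m n x \<inter> tline m n z \<subseteq> elt m n y"
  proof
    fix w assume w: "w \<in> aline m n x \<inter> tline m n z"
    have "ht w = ht y" using w assms ht_aline by auto
    then have "y @ tpow 0 \<approx> w" using tline_link[of w z y] w assms by auto
    then show "w \<in> elt m n y" unfolding elt_def by simp
  qed
next
  show "elt m n y \<subseteq> aline m n x \<inter> tline m n z"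
    unfolding elt_def using assms aline_close tline_close by blast
qed

lemma Ht_aline: "Ht (aline m n x) = ht x"
proof -
  have "(SOME w. w \<in> aline m n x) \<in> aline m n x" using aline_self by (rule someI)
  then show ?thesis unfolding Ht_def by (rule ht_aline)
qed

lemma edge_Ht: assumes "bs_edge m n L L'" shows "Ht L' = Ht L + 1"
proof -
  obtain x where x: "L = aline m n x" using assms unfolding bs_edge_def alines_def by blast
  obtain y where y: "L' = aline m n y" using assms unfolding bs_edge_def alines_def by blast
  obtain g where g: "g \<in> L" "g @ [(GT, False)] \<in> L'" using assms unfolding bs_edge_def by blast
  have "ht g = ht x" using g x ht_aline by blast
  moreover have "ht (g @ [(GT, False)]) = ht y" using g y ht_aline by blast
  ultimately show ?thesis using x y Ht_aline by simp
qed

lemma adj_Ht: "bs_adj m n L L' \<Longrightarrow> \<bar>Ht L' - Ht L\<bar> = 1"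
  unfolding bs_adj_def using edge_Ht by fastforce

lemma path_bound: assumes "bs_path m n xs L L'" shows "\<bar>Ht L' - Ht L\<bar> \<le> int (length xs) - 1"
proof -
  have A: "i < length xs \<Longrightarrow> \<bar>Ht (xs ! i) - Ht (xs ! 0)\<bar> \<le> int i" for i
  proof (induction i)
    case 0 then show ?case by simp
  next
    case (Suc i)
    have "\<bar>Ht (xs ! Suc i) - Ht (xs ! i)\<bar> = 1" using assms Suc.prems adj_Ht unfolding bs_path_def by blast
    then show ?case using Suc by simp
  qed
  have ne: "xs \<noteq> []" and "hd xs = L" "last xs = L'" using assms unfolding bs_path_def by auto
  then have "L = xs ! 0" "L' = xs ! (length xs - 1)" by (auto simp: hd_conv_nth last_conv_nth)
  moreover have "int (length xs - 1) = int (length xs) - 1" using ne by (simp add: of_nat_diff Suc_le_eq)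
  ultimately show ?thesis using A[of "length xs - 1"] ne by simp
qed

lemma path_fwd: assumes "bs_path m n xs L L'" "\<forall>i. Suc i < length xs \<longrightarrow> bs_edge m n (xs ! i) (xs ! Suc i)"
  shows "Ht L' = Ht L + int (length xs) - 1"
proof -
  have A: "i < length xs \<Longrightarrow> Ht (xs ! i) = Ht (xs ! 0) + int i" for i
  proof (induction i)
    case 0 then show ?case by simp
  next
    case (Suc i)
    have "Ht (xs ! Suc i) = Ht (xs ! i) + 1" using assms(2) Suc.prems edge_Ht by blast
    then show ?case using Suc by simp
  qed
  have ne: "xs \<noteq> []" and "hd xs = L" "last xs = L'" using assms unfolding bs_path_def by auto
  then have "L = xs ! 0" "L' = xs ! (length xs - 1)" by (auto simp: hd_conv_nth last_conv_nth)
  moreover have "int (length xs - 1) = int (length xs) - 1" using ne by (simp add: of_nat_diff Suc_le_eq)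
  ultimately show ?thesis using A[of "length xs - 1"] ne by simp
qed

lemma path_exists: "\<exists>xs. bs_path m n xs (aline m n c) (aline m n (c @ tpow J)) \<and> length xs = Suc (nat \<bar>J\<bar>)"
proof (cases "J \<ge> 0")
  case True
  define d where "d = nat J"
  define xs where "xs = map (\<lambda>i. aline m n (c @ replicate i (GT, False))) [0..<Suc d]"
  have tp: "tpow J = replicate d (GT, False)" using True by (simp add: gpow_def d_def)
  have "bs_path m n xs (aline m n c) (aline m n (c @ tpow J))"
    unfolding bs_path_def
  proof (intro conjI allI impI)
    show "xs \<noteq> []" by (simp add: xs_def)
    show "hd xs = aline m n c" by (simp add: xs_def hd_map del: upt_Suc)
    show "last xs = aline m n (c @ tpow J)" by (simp add: xs_def last_map tp del: upt_Suc)
    show "set xs \<subseteq> alines m n" by (auto simp: xs_def alines_def)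
    fix i assume i: "Suc i < length xs"
    have xi: "xs ! i = aline m n (c @ replicate i (GT, False))" using i by (simp add: xs_def nth_map del: upt_Suc)
    have xsi: "xs ! Suc i = aline m n ((c @ replicate i (GT, False)) @ [(GT, False)])"
      using i by (simp add: xs_def nth_map replicate_append_same del: upt_Suc)
    have "bs_edge m n (xs ! i) (xs ! Suc i)"
      unfolding bs_edge_def alines_def xi xsi using aline_self by blast
    then show "bs_adj m n (xs ! i) (xs ! Suc i)" unfolding bs_adj_def by blast
  qed
  moreover have "length xs = Suc (nat \<bar>J\<bar>)" using True by (simp add: xs_def d_def)
  ultimately show ?thesis by blast
next
  case False
  define d where "d = nat (- J)"
  define xs where "xs = map (\<lambda>i. aline m n (c @ replicate i (GT, True))) [0..<Suc d]"
  have tp: "tpow J = replicate d (GT, True)" using False by (simp add: gpow_def d_def)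
  have "bs_path m n xs (aline m n c) (aline m n (c @ tpow J))"
    unfolding bs_path_def
  proof (intro conjI allI impI)
    show "xs \<noteq> []" by (simp add: xs_def)
    show "hd xs = aline m n c" by (simp add: xs_def hd_map del: upt_Suc)
    show "last xs = aline m n (c @ tpow J)" by (simp add: xs_def last_map tp del: upt_Suc)
    show "set xs \<subseteq> alines m n" by (auto simp: xs_def alines_def)
    fix i assume i: "Suc i < length xs"
    have g: "c @ replicate (Suc i) (GT, True) \<in> xs ! Suc i" using i aline_self by (simp add: xs_def nth_map del: upt_Suc)
    have "c @ replicate i (GT, True) @ [(GT, True), (GT, False)] \<approx> c @ replicate i (GT, True) @ []"
      using bs_eq.ctx[OF cancel2'[of m n GT False], of "c @ replicate i (GT, True)" "[]"] by simp
    then have "(c @ replicate (Suc i) (GT, True)) @ [(GT, False)] \<approx> c @ replicate i (GT, True)"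
      by (simp add: replicate_append_same[symmetric])
    then have "(c @ replicate (Suc i) (GT, True)) @ [(GT, False)] \<in> xs ! i"
      using i aline_self aline_close by (simp add: xs_def nth_map del: upt_Suc) (metis eq_sym aline_close aline_self)
    moreover have xsi: "xs ! Suc i = aline m n (c @ replicate (Suc i) (GT, True))"
      using i by (simp add: xs_def nth_map del: upt_Suc)
    moreover have xi: "xs ! i = aline m n (c @ replicate i (GT, True))"
      using i by (simp add: xs_def nth_map del: upt_Suc)
    ultimately have "bs_edge m n (xs ! Suc i) (xs ! i)"
      unfolding bs_edge_def alines_def using g by blast
    then show "bs_adj m n (xs ! i) (xs ! Suc i)" unfolding bs_adj_def by blast
  qed
  moreover have "length xs = Suc (nat \<bar>J\<bar>)" using False by (simp add: xs_def d_def)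
  ultimately show ?thesis by blast
qed

lemma dist_eq: assumes "bs_path m n xs L L'" "length xs = Suc (nat \<bar>Ht L' - Ht L\<bar>)"
  shows "bs_dist m n L L' = nat \<bar>Ht L' - Ht L\<bar>"
  unfolding bs_dist_def
proof (rule Least_equality)
  show "\<exists>xs. bs_path m n xs L L' \<and> length xs = Suc (nat \<bar>Ht L' - Ht L\<bar>)" using assms by blast
next
  fix k assume "\<exists>xs. bs_path m n xs L L' \<and> length xs = Suc k"
  then obtain ys where "bs_path m n ys L L'" "length ys = Suc k" by blast
  then show "nat \<bar>Ht L' - Ht L\<bar> \<le> k" using path_bound by fastforce
qed

end


context fixes m n :: int begin

abbreviation E4 (infix "\<approx>" 50) where "x \<approx> y \<equiv> bs_eq m n x y"
lemmas [trans] = eq_trans[of m n]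

lemma set_eq:
  assumes link: "y2 @ tpow J \<approx> y1"
    and cond: "\<And>s. (\<exists>r. apow s @ tpow J \<approx> tpow J @ apow r) \<longleftrightarrow> H dvd s"
  shows "{aline m n y2 \<inter> L | L. L \<in> tlines m n \<and> L \<inter> aline m n y1 \<noteq> {} \<and> L \<inter> aline m n y2 \<noteq> {}}
         = {elt m n (y2 @ apow (H * j)) | j. True}"
proof
  show "{aline m n y2 \<inter> L | L. L \<in> tlines m n \<and> L \<inter> aline m n y1 \<noteq> {} \<and> L \<inter> aline m n y2 \<noteq> {}}
         \<subseteq> {elt m n (y2 @ apow (H * j)) | j. True}"
  proof
    fix X assume "X \<in> {aline m n y2 \<inter> L | L. L \<in> tlines m n \<and> L \<inter> aline m n y1 \<noteq> {} \<and> L \<inter> aline m n y2 \<noteq> {}}"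
    then obtain L where X: "X = aline m n y2 \<inter> L" and L: "L \<in> tlines m n" "L \<inter> aline m n y1 \<noteq> {}" "L \<inter> aline m n y2 \<noteq> {}"
      by blast
    obtain k where k: "L = tline m n k" using L(1) unfolding tlines_def by blast
    obtain z1 where z1: "z1 \<in> L" "z1 \<in> aline m n y1" using L(2) by blast
    obtain z2 where z2: "z2 \<in> L" "z2 \<in> aline m n y2" using L(3) by blast
    have Xe: "X = elt m n z2" using X k inter_elt[OF z2(2) z2(1)[unfolded k]] by simp
    have "ht z1 = ht y1" using z1 ht_aline by blast
    moreover have "ht y1 = ht y2 + J" using ht_cong[OF link] by simp
    moreover have "ht z2 = ht y2" using z2 ht_aline by blast
    ultimately have zl: "z2 @ tpow J \<approx> z1" using tline_link[OF z1(1)[unfolded k] z2(1)[unfolded k]] by simp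
    obtain s where s: "y2 @ apow s \<approx> z2" using z2 unfolding aline_def by blast
    obtain r where r: "y1 @ apow r \<approx> z1" using z1 unfolding aline_def by blast
    have "y2 @ (apow s @ tpow J) \<approx> z2 @ tpow J" using ctxR[OF s] by simp
    also have "\<dots> \<approx> z1" by (rule zl)
    also have "z1 \<approx> y1 @ apow r" using r by (rule eq_sym)
    also have "y1 @ apow r \<approx> (y2 @ tpow J) @ apow r" using ctxR[OF eq_sym[OF link]] .
    finally have "y2 @ (apow s @ tpow J) \<approx> y2 @ (tpow J @ apow r)" by simp
    then have "apow s @ tpow J \<approx> tpow J @ apow r" by (rule cancel_left)
    then have "H dvd s" using cond[of s] by blast
    then obtain j where "s = H * j" by blast
    then have "X = elt m n (y2 @ apow (H * j))" using Xe elt_cong[OF s] by simp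
    then show "X \<in> {elt m n (y2 @ apow (H * j)) | j. True}" by blast
  qed
next
  show "{elt m n (y2 @ apow (H * j)) | j. True} \<subseteq>
    {aline m n y2 \<inter> L | L. L \<in> tlines m n \<and> L \<inter> aline m n y1 \<noteq> {} \<and> L \<inter> aline m n y2 \<noteq> {}}"
  proof
    fix X assume "X \<in> {elt m n (y2 @ apow (H * j)) | j. True}"
    then obtain j where X: "X = elt m n (y2 @ apow (H * j))" by blast
    define z where "z = y2 @ apow (H * j)"
    have "H dvd H * j" by simp
    then obtain r where r: "apow (H * j) @ tpow J \<approx> tpow J @ apow r" using cond[of "H * j"] by blast
    have zt: "z \<in> tline m n z" by (rule tline_self)
    have "y2 @ apow (H * j) \<approx> z" unfolding z_def by (rule eq_refl)
    then have za: "z \<in> aline m n y2" unfolding aline_def by blast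
    have "z @ tpow J \<approx> z @ tpow J" by (rule eq_refl)
    then have zJt: "z @ tpow J \<in> tline m n z" unfolding tline_def by blast
    have "z @ tpow J \<approx> (y2 @ tpow J) @ apow r" unfolding z_def using ctxL[OF r, of y2] by simp
    also have "\<dots> \<approx> y1 @ apow r" using ctxR[OF link] .
    finally have "y1 @ apow r \<approx> z @ tpow J" by (rule eq_sym)
    then have "z @ tpow J \<in> aline m n y1" unfolding aline_def by blast
    then have "tline m n z \<inter> aline m n y1 \<noteq> {}" using zJt by blast
    moreover have "tline m n z \<inter> aline m n y2 \<noteq> {}" using zt za by blast
    moreover have "tline m n z \<in> tlines m n" unfolding tlines_def by simp
    ultimately have P: "tline m n z \<in> tlines m n \<and> tline m n z \<inter> aline m n y1 \<noteq> {} \<and> tline m n z \<inter> aline m n y2 \<noteq> {}"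
      by blast
    have "X = aline m n y2 \<inter> tline m n z" using inter_elt[OF za zt] X z_def by simp
    with P show "X \<in> {aline m n y2 \<inter> L | L. L \<in> tlines m n \<and> L \<inter> aline m n y1 \<noteq> {} \<and> L \<inter> aline m n y2 \<noteq> {}}"
      by blast
  qed
qed

end


lemma rep_cond_up:
  assumes m0: "m \<noteq> 0" and n0: "n \<noteq> 0" and hpos: "h > 0" and mh: "\<bar>m\<bar> = h * p" and nh: "\<bar>n\<bar> = h * q" and cop: "coprime p q"
  shows "(\<exists>r. bs_eq m n (apow s @ replicate (Suc d) (GT, False)) (replicate (Suc d) (GT, False) @ apow r)) \<longleftrightarrow> h * q ^ Suc d dvd s"
proof
  assume "\<exists>r. bs_eq m n (apow s @ replicate (Suc d) (GT, False)) (replicate (Suc d) (GT, False) @ apow r)"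
  then obtain r where r: "bs_eq m n (apow s @ replicate (Suc d) (GT, False)) (replicate (Suc d) (GT, False) @ apow r)" by blast
  have v0: "valid m n []" by simp
  have e: "interp m n (apow s @ replicate (Suc d) (GT, False)) [] = interp m n (replicate (Suc d) (GT, False) @ apow r) []"
    using sound[OF m0 n0 r v0] .
  have vr: "valid m n (replicate (Suc d) (False, 0))"
    using interp_valid[OF v0, of "replicate (Suc d) (GT, False)"] interp_repT[OF m0 n0, of "Suc d"] by simp
  have "interp m n (apow s @ replicate (Suc d) (GT, False)) [] = act m n s (replicate (Suc d) (False, 0))"
    by (simp only: interp_append interp_repT[OF m0 n0] interp_apow[OF m0 n0 vr])
  moreover have "interp m n (replicate (Suc d) (GT, False) @ apow r) [] = replicate (Suc d) (False, 0)"
    by (simp only: interp_append interp_apow[OF m0 n0 v0] act.simps interp_repT[OF m0 n0])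
  ultimately have "act m n s (replicate (Suc d) (False, 0)) = replicate (Suc d) (False, 0)" using e by simp
  then show "h * q ^ Suc d dvd s" using only_up[OF m0 n0 hpos mh nh cop] by blast
next
  assume "h * q ^ Suc d dvd s"
  then show "\<exists>r. bs_eq m n (apow s @ replicate (Suc d) (GT, False)) (replicate (Suc d) (GT, False) @ apow r)"
    using if_up[OF hpos mh nh m0 n0] by blast
qed

lemma rep_cond_down:
  assumes m0: "m \<noteq> 0" and n0: "n \<noteq> 0" and hpos: "h > 0" and mh: "\<bar>m\<bar> = h * p" and nh: "\<bar>n\<bar> = h * q" and cop: "coprime p q"
  shows "(\<exists>r. bs_eq m n (apow s @ replicate (Suc d) (GT, True)) (replicate (Suc d) (GT, True) @ apow r)) \<longleftrightarrow> h * p ^ Suc d dvd s"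
proof
  assume "\<exists>r. bs_eq m n (apow s @ replicate (Suc d) (GT, True)) (replicate (Suc d) (GT, True) @ apow r)"
  then obtain r where r: "bs_eq m n (apow s @ replicate (Suc d) (GT, True)) (replicate (Suc d) (GT, True) @ apow r)" by blast
  have v0: "valid m n []" by simp
  have e: "interp m n (apow s @ replicate (Suc d) (GT, True)) [] = interp m n (replicate (Suc d) (GT, True) @ apow r) []"
    using sound[OF m0 n0 r v0] .
  have vr: "valid m n (replicate (Suc d) (True, 0))"
    using interp_valid[OF v0, of "replicate (Suc d) (GT, True)"] interp_repT'[OF m0 n0, of "Suc d"] by simp
  have "interp m n (apow s @ replicate (Suc d) (GT, True)) [] = act m n s (replicate (Suc d) (True, 0))"
    by (simp only: interp_append interp_repT'[OF m0 n0] interp_apow[OF m0 n0 vr])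
  moreover have "interp m n (replicate (Suc d) (GT, True) @ apow r) [] = replicate (Suc d) (True, 0)"
    by (simp only: interp_append interp_apow[OF m0 n0 v0] act.simps interp_repT'[OF m0 n0])
  ultimately have "act m n s (replicate (Suc d) (True, 0)) = replicate (Suc d) (True, 0)" using e by simp
  then show "h * p ^ Suc d dvd s" using only_down[OF m0 n0 hpos mh nh cop] by blast
next
  assume "h * p ^ Suc d dvd s"
  then show "\<exists>r. bs_eq m n (apow s @ replicate (Suc d) (GT, True)) (replicate (Suc d) (GT, True) @ apow r)"
    using if_down[OF hpos mh nh m0 n0] by blast
qed

theorem lemma3p6:
  fixes m n h p q :: int and g1 g2 :: word
  assumes "m \<noteq> 0" and "n \<noteq> 0" and "\<bar>m\<bar> < \<bar>n\<bar>"
    and "h = gcd m n" and "p = \<bar>m\<bar> div h" and "q = \<bar>n\<bar> div h"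
    and "\<exists>L \<in> tlines m n. L \<inter> aline m n g1 \<noteq> {} \<and> L \<inter> aline m n g2 \<noteq> {}"
  shows "(bs_less m n (aline m n g2) (aline m n g1) \<longrightarrow>
           (\<exists>g \<in> aline m n g2.
              {aline m n g2 \<inter> L | L. L \<in> tlines m n \<and> L \<inter> aline m n g1 \<noteq> {} \<and> L \<inter> aline m n g2 \<noteq> {}}
              = {elt m n (g @ apow (h * q ^ bs_dist m n (aline m n g1) (aline m n g2) * j)) | j. True}))
       \<and> (bs_less m n (aline m n g1) (aline m n g2) \<longrightarrow>
           (\<exists>g \<in> aline m n g2.
              {aline m n g2 \<inter> L | L. L \<in> tlines m n \<and> L \<inter> aline m n g1 \<noteq> {} \<and> L \<inter> aline m n g2 \<noteq> {}}
              = {elt m n (g @ apow (h * p ^ bs_dist m n (aline m n g1) (aline m n g2) * j)) | j. True}))"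
proof -
  have m0: "m \<noteq> 0" and n0: "n \<noteq> 0" using assms by auto
  have hpos: "h > 0" using assms(1,4) by simp
  have hm: "h dvd \<bar>m\<bar>" and hn: "h dvd \<bar>n\<bar>" using assms(4) by simp_all
  have mh: "\<bar>m\<bar> = h * p" using hm assms(5) by simp
  have nh: "\<bar>n\<bar> = h * q" using hn assms(6) by simp
  have "coprime (\<bar>m\<bar> div gcd \<bar>m\<bar> \<bar>n\<bar>) (\<bar>n\<bar> div gcd \<bar>m\<bar> \<bar>n\<bar>)"
    using div_gcd_coprime[of "\<bar>m\<bar>" "\<bar>n\<bar>"] m0 by simp
  then have cop: "coprime p q" using assms(4,5,6) by simp
  obtain L y1 y2 where L: "L \<in> tlines m n" and y1: "y1 \<in> L" "y1 \<in> aline m n g1" and y2: "y2 \<in> L" "y2 \<in> aline m n g2"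
    using assms(7) by blast
  obtain k where k: "L = tline m n k" using L unfolding tlines_def by blast
  have a1: "aline m n g1 = aline m n y1" using aline_mem_eq[OF y1(2)] by simp
  have a2: "aline m n g2 = aline m n y2" using aline_mem_eq[OF y2(2)] by simp
  define J where "J = ht y1 - ht y2"
  have link: "bs_eq m n (y2 @ tpow J) y1" unfolding J_def using tline_link[OF y1(1)[unfolded k] y2(1)[unfolded k]] .
  have link': "bs_eq m n (y1 @ tpow (- J)) y2" unfolding J_def using tline_link[OF y2(1)[unfolded k] y1(1)[unfolded k]] by simp
  have l1: "aline m n (y2 @ tpow J) = aline m n y1" using aline_cong[OF link] .
  have l2: "aline m n (y1 @ tpow (- J)) = aline m n y2" using aline_cong[OF link'] .
  have H1: "Ht (aline m n y1) = ht y1" and H2: "Ht (aline m n y2) = ht y2" by (simp_all add: Ht_aline)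
  obtain P21 where P21: "bs_path m n P21 (aline m n y2) (aline m n y1)" "length P21 = Suc (nat \<bar>J\<bar>)"
    using path_exists[of m n y2 J] l1 by auto
  obtain P12 where P12: "bs_path m n P12 (aline m n y1) (aline m n y2)" "length P12 = Suc (nat \<bar>J\<bar>)"
    using path_exists[of m n y1 "- J"] l2 by auto
  have d21: "bs_dist m n (aline m n y2) (aline m n y1) = nat \<bar>J\<bar>"
    using dist_eq[OF P21(1)] P21(2) H1 H2 J_def by simp
  have d12: "bs_dist m n (aline m n y1) (aline m n y2) = nat \<bar>J\<bar>"
    using dist_eq[OF P12(1)] P12(2) H1 H2 J_def by (simp add: abs_minus_commute)
  have Jne: "J \<noteq> 0" if "aline m n y1 \<noteq> aline m n y2"
  proof
    assume "J = 0"
    then have "aline m n y2 = aline m n y1" using l1 by simp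
    then show False using that by simp
  qed
  show ?thesis
  proof (intro conjI impI)
    assume less: "bs_less m n (aline m n g2) (aline m n g1)"
    then have ne: "aline m n y1 \<noteq> aline m n y2" using a1 a2 unfolding bs_less_def by auto
    have "bs_geodesic m n P21 (aline m n y2) (aline m n y1)" unfolding bs_geodesic_def using P21 d21 by simp
    then have "\<forall>i. Suc i < length P21 \<longrightarrow> bs_edge m n (P21 ! i) (P21 ! Suc i)"
      using less a1 a2 unfolding bs_less_def bs_le_def by auto
    then have "Ht (aline m n y1) = Ht (aline m n y2) + int (length P21) - 1" using path_fwd[OF P21(1)] by blast
    then have "J = \<bar>J\<bar>" using P21(2) H1 H2 J_def by simp
    then have Jpos: "J > 0" using Jne[OF ne] by linarith
    obtain d where dJ: "J = int (Suc d)" using Jpos by (intro that[of "nat J - 1"]) simp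
    have nJ: "nat J = Suc d" using dJ by simp
    have "tpow J = replicate (nat J) (GT, False)" using dJ by (simp add: gpow_def del: replicate_Suc)
    then have tp: "tpow J = replicate (Suc d) (GT, False)" by (simp only: nJ)
    have dist: "bs_dist m n (aline m n g1) (aline m n g2) = Suc d" using d12 a1 a2 dJ by simp
    have cond: "(\<exists>r. bs_eq m n (apow s @ tpow J) (tpow J @ apow r)) \<longleftrightarrow> h * q ^ Suc d dvd s" for s
      unfolding tp by (rule rep_cond_up[OF m0 n0 hpos mh nh cop])
    have "{aline m n y2 \<inter> L | L. L \<in> tlines m n \<and> L \<inter> aline m n y1 \<noteq> {} \<and> L \<inter> aline m n y2 \<noteq> {}}
         = {elt m n (y2 @ apow (h * q ^ Suc d * j)) | j. True}"
      using set_eq[OF link cond] .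
    then show "\<exists>g \<in> aline m n g2.
              {aline m n g2 \<inter> L | L. L \<in> tlines m n \<and> L \<inter> aline m n g1 \<noteq> {} \<and> L \<inter> aline m n g2 \<noteq> {}}
              = {elt m n (g @ apow (h * q ^ bs_dist m n (aline m n g1) (aline m n g2) * j)) | j. True}"
      using y2(2) a1 a2 dist by auto
  next
    assume less: "bs_less m n (aline m n g1) (aline m n g2)"
    then have ne: "aline m n y1 \<noteq> aline m n y2" using a1 a2 unfolding bs_less_def by auto
    have "bs_geodesic m n P12 (aline m n y1) (aline m n y2)" unfolding bs_geodesic_def using P12 d12 by simp
    then have "\<forall>i. Suc i < length P12 \<longrightarrow> bs_edge m n (P12 ! i) (P12 ! Suc i)"
      using less a1 a2 unfolding bs_less_def bs_le_def by auto
    then have "Ht (aline m n y2) = Ht (aline m n y1) + int (length P12) - 1" using path_fwd[OF P12(1)] by blast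
    then have "- J = \<bar>J\<bar>" using P12(2) H1 H2 J_def by simp
    then have Jneg: "J < 0" using Jne[OF ne] by linarith
    obtain d where dJ: "J = - int (Suc d)" using Jneg by (intro that[of "nat (- J) - 1"]) simp
    have nJ: "nat (- J) = Suc d" using dJ by simp
    have "tpow J = replicate (nat (- J)) (GT, True)" using dJ by (simp add: gpow_def del: replicate_Suc)
    then have tp: "tpow J = replicate (Suc d) (GT, True)" by (simp only: nJ)
    have dist: "bs_dist m n (aline m n g1) (aline m n g2) = Suc d" using d12 a1 a2 dJ by simp
    have cond: "(\<exists>r. bs_eq m n (apow s @ tpow J) (tpow J @ apow r)) \<longleftrightarrow> h * p ^ Suc d dvd s" for s
      unfolding tp by (rule rep_cond_down[OF m0 n0 hpos mh nh cop])
    have "{aline m n y2 \<inter> L | L. L \<in> tlines m n \<and> L \<inter> aline m n y1 \<noteq> {} \<and> L \<inter> aline m n y2 \<noteq> {}}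
         = {elt m n (y2 @ apow (h * p ^ Suc d * j)) | j. True}"
      using set_eq[OF link cond] .
    then show "\<exists>g \<in> aline m n g2.
              {aline m n g2 \<inter> L | L. L \<in> tlines m n \<and> L \<inter> aline m n g1 \<noteq> {} \<and> L \<inter> aline m n g2 \<noteq> {}}
              = {elt m n (g @ apow (h * p ^ bs_dist m n (aline m n g1) (aline m n g2) * j)) | j. True}"
      using y2(2) a1 a2 dist by auto
  qed
qed


end
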